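(* Let $R$ be a principal ideal domain, $M$ a faithful primeful $R$-module having at least one prime submodule, $X=\mathrm{Spec}(M)$, $N$ an $R$-module, $K\le M$, and $U=X\setminus V(K)$. Then there exists $a\in R$ such that $\mathcal{A}(N,M)(U)\cong N_a$.
   Context: For a submodule $L$ of an $R$-module $M$, $(L:M)=\{r\in R\mid rM\subseteq L\}$. A submodule $P$ of $M$ is prime if $P\neq M$ and whenever $rm\in P$ ($r\in R$, $m\in M$) then $r\in (P:M)$ or $m\in P$. $\mathrm{Spec}(M)$ is the set of prime submodules. $M$ is faithful if $\mathrm{Ann}_R(M)=0$; primeful if $M=0$ or $\mathrm{Spec}(M)\to\mathrm{Spec}(R/\mathrm{Ann}(M))$, $P\mapsto(P:M)/\mathrm{Ann}(M)$, is surjective. For $L\le M$, $V(L)=\{P\in X\mid (P:M)\supseteq (L:M)\}$; these are the closed sets of the Zariski topology. For open $U\subseteq X$, $\mathrm{Supp}(U)=\{(P:M)\mid P\in U\}$. $\mathcal{A}(N,M)(U)$ is the $R$-module of families $(\gamma_{\mathfrak p})_{\mathfrak p\in\mathrm{Supp}(U)}\in\prod_{\mathfrak p\in\mathrm{Supp}(U)}N_{\mathfrak p}$ such that for each $Q\in U$ there exist an open neighbourhood $W\subseteq U$ of $Q$ and $s\in R$, $m\in N$ with $s\notin(P:M)$ and $\gamma_{(P:M)}=m/s$ for every $P\in W$. $N_a$ denotes the localization of $N$ at the multiplicative set $\{a^n\mid n\ge0\}$. *)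

theory Defs
  imports Main "HOL.Modules"
begin

definition r_ideal :: "'r::comm_ring_1 set \<Rightarrow> bool" where
  "r_ideal I \<longleftrightarrow> 0 \<in> I \<and> (\<forall>x\<in>I. \<forall>y\<in>I. x + y \<in> I) \<and> (\<forall>r. \<forall>x\<in>I. r * x \<in> I)"

definition prime_ideal :: "'r::comm_ring_1 set \<Rightarrow> bool" where
  "prime_ideal p \<longleftrightarrow> r_ideal p \<and> p \<noteq> UNIV \<and> (\<forall>a b. a * b \<in> p \<longrightarrow> a \<in> p \<or> b \<in> p)"

definition is_pid :: "'r::idom itself \<Rightarrow> bool" where
  "is_pid _ \<longleftrightarrow> (\<forall>I::'r set. r_ideal I \<longrightarrow> (\<exists>a. I = range (\<lambda>r. r * a)))"

definition is_module :: "('r::comm_ring_1 \<Rightarrow> 'm::ab_group_add \<Rightarrow> 'm) \<Rightarrow> bool" where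
  "is_module sc \<longleftrightarrow> module sc"

definition submod :: "('r::comm_ring_1 \<Rightarrow> 'm::ab_group_add \<Rightarrow> 'm) \<Rightarrow> 'm set \<Rightarrow> bool" where
  "submod sc L \<longleftrightarrow> 0 \<in> L \<and> (\<forall>x\<in>L. \<forall>y\<in>L. x + y \<in> L) \<and> (\<forall>c. \<forall>x\<in>L. sc c x \<in> L)"

text \<open>The module M is the whole type 'm with scalar multiplication sc.\<close>

definition colon :: "('r::comm_ring_1 \<Rightarrow> 'm::ab_group_add \<Rightarrow> 'm) \<Rightarrow> 'm set \<Rightarrow> 'r set" where
  "colon sc L = {r. \<forall>m. sc r m \<in> L}"

definition annih :: "('r::comm_ring_1 \<Rightarrow> 'm::ab_group_add \<Rightarrow> 'm) \<Rightarrow> 'r set" where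
  "annih sc = {r. \<forall>m. sc r m = 0}"

definition prime_submodule :: "('r::comm_ring_1 \<Rightarrow> 'm::ab_group_add \<Rightarrow> 'm) \<Rightarrow> 'm set \<Rightarrow> bool" where
  "prime_submodule sc P \<longleftrightarrow> submod sc P \<and> P \<noteq> UNIV \<and>
     (\<forall>r m. sc r m \<in> P \<longrightarrow> r \<in> colon sc P \<or> m \<in> P)"

definition mSpec :: "('r::comm_ring_1 \<Rightarrow> 'm::ab_group_add \<Rightarrow> 'm) \<Rightarrow> 'm set set" where
  "mSpec sc = {P. prime_submodule sc P}"

definition faithful :: "('r::comm_ring_1 \<Rightarrow> 'm::ab_group_add \<Rightarrow> 'm) \<Rightarrow> bool" where
  "faithful sc \<longleftrightarrow> annih sc = {0}"

text \<open>Primeful: M = 0, or P \<mapsto> (P:M)/Ann(M) maps Spec(M) onto Spec(R/Ann(M)). Prime ideals of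
  R/Ann(M) are identified with the prime ideals of R containing Ann(M) (correspondence theorem).\<close>
definition primeful :: "('r::comm_ring_1 \<Rightarrow> 'm::ab_group_add \<Rightarrow> 'm) \<Rightarrow> bool" where
  "primeful sc \<longleftrightarrow> (UNIV::'m set) = {0} \<or>
     (\<forall>p. prime_ideal p \<and> annih sc \<subseteq> p \<longrightarrow> (\<exists>P\<in>mSpec sc. colon sc P = p))"

definition zV :: "('r::comm_ring_1 \<Rightarrow> 'm::ab_group_add \<Rightarrow> 'm) \<Rightarrow> 'm set \<Rightarrow> 'm set set" where
  "zV sc L = {P \<in> mSpec sc. colon sc L \<subseteq> colon sc P}"

definition zopen :: "('r::comm_ring_1 \<Rightarrow> 'm::ab_group_add \<Rightarrow> 'm) \<Rightarrow> 'm set set \<Rightarrow> bool" where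
  "zopen sc W \<longleftrightarrow> (\<exists>L. submod sc L \<and> W = mSpec sc - zV sc L)"

definition Supp :: "('r::comm_ring_1 \<Rightarrow> 'm::ab_group_add \<Rightarrow> 'm) \<Rightarrow> 'm set set \<Rightarrow> 'r set set" where
  "Supp sc U = (\<lambda>P. colon sc P) ` U"

definition loc_rel :: "('r::comm_ring_1 \<Rightarrow> 'n::ab_group_add \<Rightarrow> 'n) \<Rightarrow> 'r set \<Rightarrow> (('n \<times> 'r) \<times> ('n \<times> 'r)) set" where
  "loc_rel sc S = {((n, s), (n', s')). s \<in> S \<and> s' \<in> S \<and> (\<exists>t\<in>S. sc t (sc s' n - sc s n') = 0)}"

definition frac :: "('r::comm_ring_1 \<Rightarrow> 'n::ab_group_add \<Rightarrow> 'n) \<Rightarrow> 'r set \<Rightarrow> 'n \<Rightarrow> 'r \<Rightarrow> ('n \<times> 'r) set" where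
  "frac sc S n s = loc_rel sc S `` {(n, s)}"

definition loc_carrier :: "('r::comm_ring_1 \<Rightarrow> 'n::ab_group_add \<Rightarrow> 'n) \<Rightarrow> 'r set \<Rightarrow> ('n \<times> 'r) set set" where
  "loc_carrier sc S = {frac sc S n s | n s. s \<in> S}"

definition loc_add :: "('r::comm_ring_1 \<Rightarrow> 'n::ab_group_add \<Rightarrow> 'n) \<Rightarrow> 'r set \<Rightarrow> ('n \<times> 'r) set \<Rightarrow> ('n \<times> 'r) set \<Rightarrow> ('n \<times> 'r) set" where
  "loc_add sc S x y = \<Union>{frac sc S (sc s' n + sc s n') (s * s') | n s n' s'. (n, s) \<in> x \<and> (n', s') \<in> y}"

definition loc_scale :: "('r::comm_ring_1 \<Rightarrow> 'n::ab_group_add \<Rightarrow> 'n) \<Rightarrow> 'r set \<Rightarrow> 'r \<Rightarrow> ('n \<times> 'r) set \<Rightarrow> ('n \<times> 'r) set" where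
  "loc_scale sc S r x = \<Union>{frac sc S (sc r n) s | n s. (n, s) \<in> x}"

abbreviation S_prime :: "'r::comm_ring_1 set \<Rightarrow> 'r set" where
  "S_prime p \<equiv> - p"

abbreviation S_pow :: "'r::comm_ring_1 \<Rightarrow> 'r set" where
  "S_pow a \<equiv> range (\<lambda>k::nat. a ^ k)"

text \<open>Families (\<gamma>_p)_{p \<in> Supp(U)} are represented as functions that are {} off Supp(U).\<close>
definition sections ::
  "('r::comm_ring_1 \<Rightarrow> 'm::ab_group_add \<Rightarrow> 'm) \<Rightarrow> ('r \<Rightarrow> 'n::ab_group_add \<Rightarrow> 'n) \<Rightarrow> 'm set set
     \<Rightarrow> ('r set \<Rightarrow> ('n \<times> 'r) set) set" where
  "sections scM scN U = {\<gamma>.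
     (\<forall>p\<in>Supp scM U. \<gamma> p \<in> loc_carrier scN (S_prime p)) \<and>
     (\<forall>p. p \<notin> Supp scM U \<longrightarrow> \<gamma> p = {}) \<and>
     (\<forall>Q\<in>U. \<exists>W. zopen scM W \<and> Q \<in> W \<and> W \<subseteq> U \<and>
        (\<exists>s n. \<forall>P\<in>W. s \<notin> colon scM P \<and>
               \<gamma> (colon scM P) = frac scN (S_prime (colon scM P)) n s))}"

definition sec_add ::
  "('r::comm_ring_1 \<Rightarrow> 'm::ab_group_add \<Rightarrow> 'm) \<Rightarrow> ('r \<Rightarrow> 'n::ab_group_add \<Rightarrow> 'n) \<Rightarrow> 'm set set
     \<Rightarrow> ('r set \<Rightarrow> ('n \<times> 'r) set) \<Rightarrow> ('r set \<Rightarrow> ('n \<times> 'r) set) \<Rightarrow> ('r set \<Rightarrow> ('n \<times> 'r) set)" where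
  "sec_add scM scN U \<gamma> \<delta> = (\<lambda>p. if p \<in> Supp scM U then loc_add scN (S_prime p) (\<gamma> p) (\<delta> p) else {})"

definition sec_scale ::
  "('r::comm_ring_1 \<Rightarrow> 'm::ab_group_add \<Rightarrow> 'm) \<Rightarrow> ('r \<Rightarrow> 'n::ab_group_add \<Rightarrow> 'n) \<Rightarrow> 'm set set
     \<Rightarrow> 'r \<Rightarrow> ('r set \<Rightarrow> ('n \<times> 'r) set) \<Rightarrow> ('r set \<Rightarrow> ('n \<times> 'r) set)" where
  "sec_scale scM scN U r \<gamma> = (\<lambda>p. if p \<in> Supp scM U then loc_scale scN (S_prime p) r (\<gamma> p) else {})"

definition sections_iso_loc ::
  "('r::comm_ring_1 \<Rightarrow> 'm::ab_group_add \<Rightarrow> 'm) \<Rightarrow> ('r \<Rightarrow> 'n::ab_group_add \<Rightarrow> 'n) \<Rightarrow> 'm set set \<Rightarrow> 'r \<Rightarrow> bool" where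
  "sections_iso_loc scM scN U a \<longleftrightarrow> (\<exists>f.
     bij_betw f (sections scM scN U) (loc_carrier scN (S_pow a)) \<and>
     (\<forall>\<gamma>\<in>sections scM scN U. \<forall>\<delta>\<in>sections scM scN U.
        f (sec_add scM scN U \<gamma> \<delta>) = loc_add scN (S_pow a) (f \<gamma>) (f \<delta>)) \<and>
     (\<forall>r. \<forall>\<gamma>\<in>sections scM scN U.
        f (sec_scale scM scN U r \<gamma>) = loc_scale scN (S_pow a) r (f \<gamma>)))"

end

theory Submission imports Defs begin

definition mset :: "'r::comm_ring_1 set \<Rightarrow> bool" where
  "mset S \<longleftrightarrow> 1 \<in> S \<and> (\<forall>x\<in>S. \<forall>y\<in>S. x * y \<in> S)"

lemma loc_rel_equiv:
  assumes M: "module sc" and S: "mset S"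
  shows "equiv (UNIV \<times> S) (loc_rel sc S)"
proof -
  interpret module sc by fact
  have one: "1 \<in> S" and mul: "\<And>x y. x \<in> S \<Longrightarrow> y \<in> S \<Longrightarrow> x * y \<in> S" using S by (auto simp: mset_def)
  show ?thesis
  proof (rule equivI)
    show "loc_rel sc S \<subseteq> (UNIV \<times> S) \<times> UNIV \<times> S" unfolding loc_rel_def by auto
    show "refl_on (UNIV \<times> S) (loc_rel sc S)"
      unfolding refl_on_def loc_rel_def using one by force
    show "sym (loc_rel sc S)"
    proof (rule symI)
      fix x y assume "(x, y) \<in> loc_rel sc S"
      then obtain n s n' s' t where xy: "x = (n, s)" "y = (n', s')" "s \<in> S" "s' \<in> S" "t \<in> S"
        "sc t (sc s' n - sc s n') = 0" unfolding loc_rel_def by auto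
      have "sc t (sc s n' - sc s' n) = - sc t (sc s' n - sc s n')" by (simp add: algebra_simps)
      with xy show "(y, x) \<in> loc_rel sc S" unfolding loc_rel_def by auto
    qed
    show "trans (loc_rel sc S)"
    proof (rule transI)
      fix x y z assume "(x, y) \<in> loc_rel sc S" "(y, z) \<in> loc_rel sc S"
      then obtain n s n1 s1 n2 s2 t u where xy: "x = (n, s)" "y = (n1, s1)" "z = (n2, s2)" "s \<in> S" "s1 \<in> S" "s2 \<in> S"
        "t \<in> S" "sc t (sc s1 n - sc s n1) = 0" "u \<in> S" "sc u (sc s2 n1 - sc s1 n2) = 0"
        unfolding loc_rel_def by auto
      have "sc (t*u*s1) (sc s2 n - sc s n2) = sc (u*s2) (sc t (sc s1 n - sc s n1)) + sc (t*s) (sc u (sc s2 n1 - sc s1 n2))"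
        by (simp add: algebra_simps)
      also have "\<dots> = 0" using xy by simp
      finally have "sc (t*u*s1) (sc s2 n - sc s n2) = 0" .
      moreover have "t*u*s1 \<in> S" using xy mul by blast
      ultimately show "(x, z) \<in> loc_rel sc S" using xy unfolding loc_rel_def by blast
    qed
  qed
qed

lemma frac_eq:
  assumes M: "module sc" and S: "mset S" and "s \<in> S" "s' \<in> S"
  shows "frac sc S n s = frac sc S n' s' \<longleftrightarrow> (\<exists>t\<in>S. sc t (sc s' n - sc s n') = 0)"
proof -
  have "frac sc S n s = frac sc S n' s' \<longleftrightarrow> ((n, s), (n', s')) \<in> loc_rel sc S"
    unfolding frac_def using eq_equiv_class_iff[OF loc_rel_equiv[OF M S]] assms by auto
  then show ?thesis using assms unfolding loc_rel_def by auto
qed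

lemma frac_eqI:
  assumes M: "module sc" and S: "mset S" and "s \<in> S" "s' \<in> S" "sc s' n = sc s n'"
  shows "frac sc S n s = frac sc S n' s'"
proof -
  interpret module sc by fact
  have "1 \<in> S" using S by (auto simp: mset_def)
  then show ?thesis using frac_eq[OF assms(1-4)] assms(5) by force
qed

lemma self_in_frac:
  assumes M: "module sc" and S: "mset S" and "s \<in> S"
  shows "(n, s) \<in> frac sc S n s"
  using loc_rel_equiv[OF M S] assms(3) unfolding frac_def equiv_def refl_on_def by auto

lemma frac_member:
  assumes M: "module sc" and S: "mset S" and "s \<in> S" and "(n1, s1) \<in> frac sc S n s"
  shows "s1 \<in> S \<and> frac sc S n1 s1 = frac sc S n s"
proof -
  have r: "((n, s), (n1, s1)) \<in> loc_rel sc S" using assms(4) by (simp add: frac_def)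
  then have "s1 \<in> S" by (simp add: loc_rel_def)
  moreover have "frac sc S n s = frac sc S n1 s1"
    unfolding frac_def using r loc_rel_equiv[OF M S] equiv_class_eq_iff by metis
  ultimately show ?thesis by simp
qed

lemma loc_add_frac:
  assumes M: "module sc" and S: "mset S" and s: "s \<in> S" "s' \<in> S"
  shows "loc_add sc S (frac sc S n s) (frac sc S n' s') = frac sc S (sc s' n + sc s n') (s * s')"
proof -
  interpret module sc by fact
  have mul: "\<And>x y. x \<in> S \<Longrightarrow> y \<in> S \<Longrightarrow> x * y \<in> S" using S by (auto simp: mset_def)
  let ?F = "{frac sc S (sc s2 n1 + sc s1 n2) (s1 * s2) | n1 s1 n2 s2. (n1, s1) \<in> frac sc S n s \<and> (n2, s2) \<in> frac sc S n' s'}"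
  have "?F = {frac sc S (sc s' n + sc s n') (s * s')}"
  proof (intro equalityI subsetI)
    fix X assume "X \<in> ?F"
    then obtain n1 s1 n2 s2 where X: "X = frac sc S (sc s2 n1 + sc s1 n2) (s1 * s2)"
      and m1: "(n1, s1) \<in> frac sc S n s" and m2: "(n2, s2) \<in> frac sc S n' s'" by blast
    from m1 obtain t1 where t1: "s1 \<in> S" "t1 \<in> S" "sc t1 (sc s1 n - sc s n1) = 0"
      by (auto simp: frac_def loc_rel_def)
    from m2 obtain t2 where t2: "s2 \<in> S" "t2 \<in> S" "sc t2 (sc s2 n' - sc s' n2) = 0"
      by (auto simp: frac_def loc_rel_def)
    have "sc (t1*t2) (sc (s1*s2) (sc s' n + sc s n') - sc (s*s') (sc s2 n1 + sc s1 n2))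
       = sc (t2*s'*s2) (sc t1 (sc s1 n - sc s n1)) + sc (t1*s*s1) (sc t2 (sc s2 n' - sc s' n2))"
      by (simp add: algebra_simps)
    also have "\<dots> = 0" using t1 t2 by simp
    finally have "frac sc S (sc s' n + sc s n') (s * s') = X"
      unfolding X using frac_eq[OF M S mul[OF s] mul[OF t1(1) t2(1)]] mul[OF t1(2) t2(2)] by blast
    then show "X \<in> {frac sc S (sc s' n + sc s n') (s * s')}" by simp
  next
    fix X assume "X \<in> {frac sc S (sc s' n + sc s n') (s * s')}"
    then show "X \<in> ?F" using self_in_frac[OF M S s(1)] self_in_frac[OF M S s(2)] by blast
  qed
  then show ?thesis unfolding loc_add_def by simp
qed

lemma loc_scale_frac:
  assumes M: "module sc" and S: "mset S" and s: "s \<in> S"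
  shows "loc_scale sc S r (frac sc S n s) = frac sc S (sc r n) s"
proof -
  interpret module sc by fact
  let ?F = "{frac sc S (sc r n1) s1 | n1 s1. (n1, s1) \<in> frac sc S n s}"
  have "?F = {frac sc S (sc r n) s}"
  proof (intro equalityI subsetI)
    fix X assume "X \<in> ?F"
    then obtain n1 s1 where X: "X = frac sc S (sc r n1) s1"
      and m1: "(n1, s1) \<in> frac sc S n s" by blast
    from m1 obtain t1 where t1: "s1 \<in> S" "t1 \<in> S" "sc t1 (sc s1 n - sc s n1) = 0"
      by (auto simp: frac_def loc_rel_def)
    have "sc t1 (sc s1 (sc r n) - sc s (sc r n1)) = sc r (sc t1 (sc s1 n - sc s n1))"
      by (simp add: algebra_simps)
    also have "\<dots> = 0" using t1 by simp
    finally have "frac sc S (sc r n) s = X"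
      unfolding X using frac_eq[OF M S s t1(1)] t1(2) by blast
    then show "X \<in> {frac sc S (sc r n) s}" by simp
  next
    fix X assume "X \<in> {frac sc S (sc r n) s}"
    then show "X \<in> ?F" using self_in_frac[OF M S s] by blast
  qed
  then show ?thesis unfolding loc_scale_def by simp
qed

lemma r_ideal_neg: "r_ideal I \<Longrightarrow> x \<in> I \<Longrightarrow> - x \<in> I"
  unfolding r_ideal_def by (metis mult_minus1)

lemma r_ideal_mult: "r_ideal I \<Longrightarrow> x \<in> I \<Longrightarrow> r * x \<in> I"
  unfolding r_ideal_def by blast

lemma r_ideal_mult2: "r_ideal I \<Longrightarrow> x \<in> I \<Longrightarrow> x * r \<in> I"
  unfolding r_ideal_def by (metis mult.commute)

lemma r_ideal_add: "r_ideal I \<Longrightarrow> x \<in> I \<Longrightarrow> y \<in> I \<Longrightarrow> x + y \<in> I"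
  unfolding r_ideal_def by blast

lemma r_ideal_0: "r_ideal I \<Longrightarrow> 0 \<in> I"
  unfolding r_ideal_def by blast

lemma prime_one: "prime_ideal p \<Longrightarrow> 1 \<notin> p"
  unfolding prime_ideal_def r_ideal_def by (metis UNIV_eq_I mult.right_neutral)

lemma prime_pow0: "prime_ideal p \<Longrightarrow> a \<notin> p \<Longrightarrow> a ^ k \<notin> p"
proof (induction k)
  case 0 then show ?case using prime_one by simp
next
  case (Suc k) then show ?case unfolding prime_ideal_def by auto
qed

lemma prime_mult: "prime_ideal p \<Longrightarrow> a \<notin> p \<Longrightarrow> b \<notin> p \<Longrightarrow> a * b \<notin> p"
  unfolding prime_ideal_def by auto

lemma prime_pow: "prime_ideal p \<Longrightarrow> a \<notin> p \<Longrightarrow> a ^ k \<notin> p"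
  and prime_pow2: "prime_ideal p \<and> Q \<Longrightarrow> a \<notin> p \<Longrightarrow> a ^ k \<in> - p"
proof -
  show "prime_ideal p \<Longrightarrow> a \<notin> p \<Longrightarrow> a ^ k \<notin> p" by (rule prime_pow0)
  then show "prime_ideal p \<and> Q \<Longrightarrow> a \<notin> p \<Longrightarrow> a ^ k \<in> - p" by simp
qed

lemma mset_prime: "prime_ideal p \<Longrightarrow> mset (- p)"
  unfolding mset_def using prime_one prime_mult by auto

lemma mset_pow: "mset (S_pow a)"
proof -
  have "1 \<in> S_pow a" by (metis power_0 rangeI)
  moreover have "\<forall>x\<in>S_pow a. \<forall>y\<in>S_pow a. x * y \<in> S_pow a" by (auto simp: power_add[symmetric])
  ultimately show ?thesis unfolding mset_def by blast
qed

lemma pow_notin: "prime_ideal p \<Longrightarrow> a \<notin> p \<Longrightarrow> S_pow a \<subseteq> - p"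
  using prime_pow by auto

lemma principal_ideal: "r_ideal (range (\<lambda>r. r * (a::'r::comm_ring_1)))"
  unfolding r_ideal_def
proof (intro conjI ballI allI)
  show "0 \<in> range (\<lambda>r. r * a)" by (rule range_eqI[of _ _ 0]) simp
next
  fix x y assume "x \<in> range (\<lambda>r. r * a)" "y \<in> range (\<lambda>r. r * a)"
  then obtain u v where "x = u * a" "y = v * a" by blast
  then show "x + y \<in> range (\<lambda>r. r * a)" by (intro range_eqI[of _ _ "u + v"]) (simp add: distrib_right)
next
  fix r x assume "x \<in> range (\<lambda>r. r * a)"
  then obtain u where "x = u * a" by blast
  then show "r * x \<in> range (\<lambda>r. r * a)" by (intro range_eqI[of _ _ "r * u"]) (simp add: mult.assoc)
qed

lemma rad:
  fixes J :: "'r::comm_ring_1 set"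
  assumes J: "r_ideal J" and H: "\<forall>p. prime_ideal p \<and> J \<subseteq> p \<longrightarrow> z \<in> p"
  shows "\<exists>n. z ^ n \<in> J"
proof (rule ccontr)
  assume nz: "\<not> ?thesis"
  let ?A = "{I. r_ideal I \<and> J \<subseteq> I \<and> (\<forall>n. z ^ n \<notin> I)}"
  have "\<exists>M\<in>?A. \<forall>X\<in>?A. M \<subseteq> X \<longrightarrow> X = M"
  proof (rule Zorn_Lemma2, intro ballI)
    fix C assume C: "C \<in> chains ?A"
    show "\<exists>U\<in>?A. \<forall>X\<in>C. X \<subseteq> U"
    proof (cases "C = {}")
      case True then show ?thesis using J nz by auto
    next
      case False
      have CA: "C \<subseteq> ?A" and ch: "\<And>X Y. X \<in> C \<Longrightarrow> Y \<in> C \<Longrightarrow> X \<subseteq> Y \<or> Y \<subseteq> X"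
        using C unfolding chains_def chain_subset_def by auto
      have "r_ideal (\<Union>C)"
        unfolding r_ideal_def
      proof (intro conjI ballI allI)
        show "0 \<in> \<Union>C" using False CA r_ideal_0 by blast
      next
        fix x y assume "x \<in> \<Union>C" "y \<in> \<Union>C"
        then obtain X Y where "X \<in> C" "Y \<in> C" "x \<in> X" "y \<in> Y" by blast
        then have "(x \<in> Y \<and> y \<in> Y \<and> Y \<in> C) \<or> (x \<in> X \<and> y \<in> X \<and> X \<in> C)" using ch[of X Y] by blast
        moreover have "\<And>Z. Z \<in> C \<Longrightarrow> r_ideal Z" using CA by blast
        ultimately show "x + y \<in> \<Union>C" using r_ideal_add by blast
      next
        fix r x assume "x \<in> \<Union>C"
        then obtain X where "X \<in> C" "x \<in> X" by blast
        then show "r * x \<in> \<Union>C" using CA r_ideal_mult by blast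
      qed
      moreover have "J \<subseteq> \<Union>C" using False CA by blast
      moreover have "\<forall>n. z ^ n \<notin> \<Union>C" using CA by blast
      ultimately show ?thesis by blast
    qed
  qed
  then obtain P where PA: "P \<in> ?A" and max0: "\<forall>X\<in>?A. P \<subseteq> X \<longrightarrow> X = P" by blast
  have P: "r_ideal P" "J \<subseteq> P" "\<And>n. z ^ n \<notin> P" using PA by auto
  have max: "\<And>X. X \<in> ?A \<Longrightarrow> P \<subseteq> X \<Longrightarrow> X = P" using max0 by blast
  have ext: "\<exists>i. z ^ i \<in> {q + r * x | q r. q \<in> P}" if "x \<notin> P" for x
  proof (rule ccontr)
    assume a: "\<not> ?thesis"
    let ?I = "{q + r * x | q r. q \<in> P}"
    have "r_ideal ?I" unfolding r_ideal_def
    proof (intro conjI ballI allI)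
      have "(0::'r) = 0 + 0 * x \<and> (0::'r) \<in> P" using P(1) r_ideal_0 by simp
      then show "0 \<in> ?I" by blast
    next
      fix u v assume "u \<in> ?I" "v \<in> ?I"
      then obtain q1 r1 q2 r2 where "u = q1 + r1 * x" "v = q2 + r2 * x" "q1 \<in> P" "q2 \<in> P" by blast
      then have "u + v = (q1 + q2) + (r1 + r2) * x" "q1 + q2 \<in> P" using P(1) r_ideal_add by (auto simp: algebra_simps)
      then show "u + v \<in> ?I" by blast
    next
      fix r u assume "u \<in> ?I"
      then obtain q1 r1 where "u = q1 + r1 * x" "q1 \<in> P" by blast
      then have "r * u = r * q1 + (r * r1) * x" "r * q1 \<in> P" using P(1) r_ideal_mult by (auto simp: algebra_simps)
      then show "r * u \<in> ?I" by blast
    qed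
    moreover have "P \<subseteq> ?I"
    proof
      fix q assume "q \<in> P" then have "q = q + 0 * x \<and> q \<in> P" by simp
      then show "q \<in> ?I" by blast
    qed
    moreover have "\<forall>n. z ^ n \<notin> ?I" using a by blast
    ultimately have "?I \<in> ?A" using P(2) by blast
    then have "?I = P" using max \<open>P \<subseteq> ?I\<close> by blast
    moreover have "x \<in> ?I"
    proof -
      have "x = 0 + 1 * x \<and> (0::'r) \<in> P" using P(1) r_ideal_0 by simp
      then show ?thesis by blast
    qed
    ultimately show False using that by blast
  qed
  have "prime_ideal P" unfolding prime_ideal_def
  proof (intro conjI allI impI)
    show "r_ideal P" by fact
    show "P \<noteq> UNIV" using P(3)[of 0] by auto
  next
    fix x y assume xy: "x * y \<in> P"
    show "x \<in> P \<or> y \<in> P"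
    proof (rule ccontr)
      assume "\<not> (x \<in> P \<or> y \<in> P)"
      then obtain i j q1 r1 q2 r2 where "z ^ i = q1 + r1 * x" "z ^ j = q2 + r2 * y" "q1 \<in> P" "q2 \<in> P"
        using ext by blast
      then have "z ^ (i + j) = q1 * q2 + q1 * (r2 * y) + q2 * (r1 * x) + (r1 * r2) * (x * y)"
        by (simp add: power_add algebra_simps)
      moreover have "q1 * q2 + q1 * (r2 * y) + q2 * (r1 * x) + (r1 * r2) * (x * y) \<in> P"
      proof -
        have "q1 * q2 \<in> P" "q1 * (r2 * y) \<in> P" "q2 * (r1 * x) \<in> P" "(r1 * r2) * (x * y) \<in> P"
          using \<open>q1 \<in> P\<close> \<open>q2 \<in> P\<close> xy P(1) r_ideal_mult r_ideal_mult2 by blast+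
        then show ?thesis using P(1) r_ideal_add by blast
      qed
      ultimately show False using P(3) by metis
    qed
  qed
  then have "z \<in> P" using H P(2) by blast
  then show False using P(3)[of 1] by simp
qed


lemma ann_ideal: "module sc \<Longrightarrow> r_ideal {t. sc t v = 0}"
proof -
  assume "module sc"
  interpret module sc by fact
  show ?thesis unfolding r_ideal_def by (auto simp: scale_left_distrib simp flip: scale_scale)
qed

lemma colon_ideal:
  assumes "module sc" "submod sc L" shows "r_ideal (colon sc L)"
proof -
  interpret module sc by fact
  have L: "0 \<in> L" "\<And>x y. x \<in> L \<Longrightarrow> y \<in> L \<Longrightarrow> x + y \<in> L" "\<And>c x. x \<in> L \<Longrightarrow> sc c x \<in> L"
    using assms(2) unfolding submod_def by auto
  have 1: "0 \<in> colon sc L" using L unfolding colon_def by simp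
  have 2: "x + y \<in> colon sc L" if "x \<in> colon sc L" "y \<in> colon sc L" for x y
    using that L unfolding colon_def by (simp add: scale_left_distrib)
  have 3: "r * x \<in> colon sc L" if "x \<in> colon sc L" for r x
    using that L unfolding colon_def by (simp add: mult.commute flip: scale_scale)
  show ?thesis unfolding r_ideal_def using 1 2 3 by blast
qed

lemma colon_prime:
  assumes "module sc" "P \<in> mSpec sc" shows "prime_ideal (colon sc P)"
proof -
  interpret module sc by fact
  have P: "submod sc P" "P \<noteq> UNIV" "\<And>r m. sc r m \<in> P \<Longrightarrow> r \<in> colon sc P \<or> m \<in> P"
    using assms(2) unfolding mSpec_def prime_submodule_def by auto
  show ?thesis unfolding prime_ideal_def
  proof (intro conjI allI impI)
    show "r_ideal (colon sc P)" using colon_ideal assms(1) P(1) by blast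
    show "colon sc P \<noteq> UNIV"
    proof
      assume "colon sc P = UNIV"
      then have "1 \<in> colon sc P" by simp
      then have "\<forall>m. m \<in> P" unfolding colon_def by simp
      then show False using P(2) by auto
    qed
  next
    fix x y assume xy: "x * y \<in> colon sc P"
    show "x \<in> colon sc P \<or> y \<in> colon sc P"
    proof (rule ccontr)
      assume "\<not> ?thesis"
      then obtain m0 where m0: "sc y m0 \<notin> P" "x \<notin> colon sc P" unfolding colon_def by auto
      have "sc x (sc y m0) \<in> P" using xy unfolding colon_def by simp
      then show False using P(3) m0 by blast
    qed
  qed
qed

inductive_set gen :: "'r::comm_ring_1 set \<Rightarrow> 'r set" for B where
  gen0: "0 \<in> gen B"
| genB: "b \<in> B \<Longrightarrow> b \<in> gen B"
| genM: "x \<in> gen B \<Longrightarrow> r * x \<in> gen B"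
| genA: "x \<in> gen B \<Longrightarrow> y \<in> gen B \<Longrightarrow> x + y \<in> gen B"

lemma gen_ideal: "r_ideal (gen B)"
  unfolding r_ideal_def by (auto intro: gen.intros)

lemma gen_sub: assumes "r_ideal I" "B \<subseteq> I" shows "gen B \<subseteq> I"
proof
  fix x assume "x \<in> gen B"
  then show "x \<in> I" using assms by (induction rule: gen.induct) (auto intro: r_ideal_0 r_ideal_mult r_ideal_add)
qed


lemma p_zero: "prime_ideal p \<Longrightarrow> 0 \<in> p"
  unfolding prime_ideal_def r_ideal_def by blast

lemma p_mul: "prime_ideal p \<and> Q \<Longrightarrow> x \<in> p \<Longrightarrow> r * x \<in> p"
  unfolding prime_ideal_def r_ideal_def by blast

lemma p_add: "prime_ideal p \<and> Q \<Longrightarrow> x \<in> p \<Longrightarrow> y \<in> p \<Longrightarrow> x + y \<in> p"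
  unfolding prime_ideal_def r_ideal_def by blast

locale stp =
  fixes scM :: "'r::idom \<Rightarrow> 'm::ab_group_add \<Rightarrow> 'm"
    and scN :: "'r \<Rightarrow> 'n::ab_group_add \<Rightarrow> 'n"
    and K :: "'m set" and a :: 'r
  assumes MM: "module scM" and NN: "module scN"
    and pid: "is_pid TYPE('r)"
    and surj: "\<And>p. prime_ideal p \<Longrightarrow> \<exists>P\<in>mSpec scM. colon scM P = p"
    and Ksub: "submod scM K" and Kc: "colon scM K = range (\<lambda>r. r * a)"
begin

abbreviation "Dset \<equiv> {p. prime_ideal p \<and> a \<notin> p}"
abbreviation "U \<equiv> mSpec scM - zV scM K"
abbreviation "G n s \<equiv> (\<lambda>p. if p \<in> Dset then frac scN (- p) n s else {})"

lemma W_char: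
  assumes "submod scM L" "colon scM L = range (\<lambda>r. r * b)"
  shows "P \<in> mSpec scM - zV scM L \<longleftrightarrow> P \<in> mSpec scM \<and> b \<notin> colon scM P"
proof (cases "P \<in> mSpec scM")
  case True
  then have I: "r_ideal (colon scM P)" using colon_prime[OF MM] prime_ideal_def by blast
  have "colon scM L \<subseteq> colon scM P \<longleftrightarrow> b \<in> colon scM P"
  proof
    assume "colon scM L \<subseteq> colon scM P"
    moreover have "b \<in> colon scM L" using assms(2) by (metis mult_1 rangeI)
    ultimately show "b \<in> colon scM P" by blast
  next
    assume "b \<in> colon scM P"
    then show "colon scM L \<subseteq> colon scM P" using assms(2) I r_ideal_mult by auto
  qed
  then show ?thesis using True unfolding zV_def by auto
qed (auto)

lemma U_char: "P \<in> U \<longleftrightarrow> P \<in> mSpec scM \<and> a \<notin> colon scM P"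
  using W_char[OF Ksub Kc] .

lemma Supp_U: "Supp scM U = Dset"
proof (intro equalityI subsetI)
  fix p assume "p \<in> Supp scM U"
  then obtain P where "P \<in> U" "p = colon scM P" unfolding Supp_def by blast
  then show "p \<in> Dset" using U_char colon_prime[OF MM] by auto
next
  fix p assume "p \<in> Dset"
  then obtain P where "P \<in> mSpec scM" "colon scM P = p" using surj by blast
  then show "p \<in> Supp scM U" unfolding Supp_def using U_char \<open>p \<in> Dset\<close> by auto
qed


lemma D_prime: "p \<in> Dset \<Longrightarrow> S_pow a \<subseteq> - p"
  using pow_notin by auto

lemma G_welldef:
  assumes "s \<in> S_pow a" "s' \<in> S_pow a" "frac scN (S_pow a) n s = frac scN (S_pow a) n' s'"
  shows "G n s = G n' s'"
proof
  fix p show "G n s p = G n' s' p"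
  proof (cases "p \<in> Dset")
    case True
    obtain t where t: "t \<in> S_pow a" "scN t (scN s' n - scN s n') = 0"
      using frac_eq[OF NN mset_pow assms(1,2)] assms(3) by blast
    have sub: "S_pow a \<subseteq> - p" using D_prime True by blast
    have "frac scN (- p) n s = frac scN (- p) n' s'"
      using frac_eq[OF NN mset_prime, of p s s' n n'] True sub assms(1,2) t by blast
    then show ?thesis using True by simp
  next
    case False then show ?thesis by (simp only: if_not_P[OF False] if_False)
  qed
qed

lemma G_sections:
  assumes "s \<in> S_pow a" shows "G n s \<in> sections scM scN U"
  unfolding sections_def Supp_U
proof (intro CollectI conjI ballI allI impI)
  fix p assume p: "p \<in> Dset"
  then have "s \<in> - p" using D_prime assms by blast
  then show "G n s p \<in> loc_carrier scN (- p)" using p unfolding loc_carrier_def by auto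
next
  fix p assume pD: "p \<notin> Dset" then show "G n s p = {}" by (simp only: if_not_P[OF pD] if_False)
next
  fix Q assume Q: "Q \<in> U"
  have zo: "zopen scM U" unfolding zopen_def using Ksub by blast
  have "\<forall>P\<in>U. s \<notin> colon scM P \<and> G n s (colon scM P) = frac scN (- colon scM P) n s"
  proof
    fix P assume "P \<in> U"
    then have "colon scM P \<in> Dset" using U_char colon_prime[OF MM] by auto
    then show "s \<notin> colon scM P \<and> G n s (colon scM P) = frac scN (- colon scM P) n s"
      using D_prime assms by auto
  qed
  then show "\<exists>W. zopen scM W \<and> Q \<in> W \<and> W \<subseteq> U \<and>
          (\<exists>s2 n2. \<forall>P\<in>W. s2 \<notin> colon scM P \<and> G n s (colon scM P) = frac scN (- colon scM P) n2 s2)"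
    using zo Q by blast
qed

lemma G_inj:
  assumes s: "s \<in> S_pow a" "s' \<in> S_pow a" and eq: "G n s = G n' s'"
  shows "frac scN (S_pow a) n s = frac scN (S_pow a) n' s'"
proof -
  let ?v = "scN s' n - scN s n'"
  have "\<exists>e. a ^ e \<in> {t. scN t ?v = 0}"
  proof (rule rad[OF ann_ideal[OF NN]], intro allI impI)
    fix q assume q: "prime_ideal q \<and> {t. scN t ?v = 0} \<subseteq> q"
    show "a \<in> q"
    proof (rule ccontr)
      assume "a \<notin> q"
      then have qD: "q \<in> Dset" using q by simp
      then have "frac scN (- q) n s = frac scN (- q) n' s'" using fun_cong[OF eq, of q] by simp
      then obtain t where "t \<in> - q" "scN t ?v = 0"
        using frac_eq[OF NN mset_prime, of q s s' n n'] q D_prime[OF qD] s by blast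
      then show False using q by blast
    qed
  qed
  then obtain e where "scN (a ^ e) ?v = 0" by blast
  then show ?thesis using frac_eq[OF NN mset_pow s] by blast
qed

lemma G_add:
  assumes s: "s \<in> S_pow a" "s' \<in> S_pow a"
  shows "sec_add scM scN U (G n s) (G n' s') = G (scN s' n + scN s n') (s * s')"
  unfolding sec_add_def Supp_U
proof
  fix p show "(if p \<in> Dset then loc_add scN (- p) (G n s p) (G n' s' p) else {}) = G (scN s' n + scN s n') (s * s') p"
  proof (cases "p \<in> Dset")
    case True
    then have "s \<in> - p" "s' \<in> - p" using D_prime s by auto
    then show ?thesis using True loc_add_frac[OF NN mset_prime] by simp
  next
    case False then show ?thesis by (simp only: if_not_P[OF False] if_False)
  qed
qed

lemma G_scale:
  assumes s: "s \<in> S_pow a"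
  shows "sec_scale scM scN U r (G n s) = G (scN r n) s"
  unfolding sec_scale_def Supp_U
proof
  fix p show "(if p \<in> Dset then loc_scale scN (- p) r (G n s p) else {}) = G (scN r n) s p"
  proof (cases "p \<in> Dset")
    case True
    then have "s \<in> - p" using D_prime s by auto
    then show ?thesis using True loc_scale_frac[OF NN mset_prime] by simp
  next
    case False then show ?thesis by (simp only: if_not_P[OF False] if_False)
  qed
qed


definition Bset :: "('r set \<Rightarrow> ('n \<times> 'r) set) \<Rightarrow> 'r set" where
  "Bset \<gamma> = {b. \<exists>s n. \<forall>p. prime_ideal p \<and> b \<notin> p \<longrightarrow> p \<in> Dset \<and> s \<notin> p \<and> \<gamma> p = frac scN (- p) n s}"

lemma glue:
  assumes "x \<in> gen (Bset \<gamma>)"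
  shows "\<exists>m k. \<forall>p. prime_ideal p \<and> x \<notin> p \<longrightarrow> p \<in> Dset \<and> \<gamma> p = frac scN (- p) m (x ^ k)"
  using assms
proof (induction rule: gen.induct)
  case gen0
  have "\<And>p. prime_ideal p \<Longrightarrow> 0 \<in> p" using p_zero by blast
  then show ?case by blast
next
  case (genB b)
  from genB have "\<exists>s n. \<forall>p. prime_ideal p \<and> b \<notin> p \<longrightarrow> p \<in> Dset \<and> s \<notin> p \<and> \<gamma> p = frac scN (- p) n s"
    unfolding Bset_def by (rule CollectD)
  then obtain s n where sn: "\<forall>p. prime_ideal p \<and> b \<notin> p \<longrightarrow> p \<in> Dset \<and> s \<notin> p \<and> \<gamma> p = frac scN (- p) n s"
    by metis
  have "\<exists>e. b ^ e \<in> range (\<lambda>r. r * s)"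
  proof (rule rad[OF principal_ideal], intro allI impI)
    fix q assume q: "prime_ideal q \<and> range (\<lambda>r. r * s) \<subseteq> q"
    have "s \<in> range (\<lambda>r. r * s)" by (rule range_eqI[of _ _ 1]) simp
    then have sq: "s \<in> q" using q by (rule_tac subsetD) simp_all
    show "b \<in> q"
    proof (rule ccontr)
      assume "b \<notin> q"
      then have "s \<notin> q" using sn q by metis
      then show False using sq by contradiction
    qed
  qed
  then obtain e c where ec: "b ^ e = c * s" by blast
  show ?case
  proof (intro exI allI impI)
    fix p assume p: "prime_ideal p \<and> b \<notin> p"
    then have *: "p \<in> Dset" "s \<notin> p" "\<gamma> p = frac scN (- p) n s" using sn by metis+
    have mp: "mset (- p)" using mset_prime p by blast
    have sp: "s \<in> - p" using *(2) by simp
    have bp: "b ^ e \<in> - p" using prime_pow2[OF p] p by simp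
    have eq: "scN (b ^ e) n = scN s (scN c n)"
      using ec module.scale_scale[OF NN, of s c n] by (simp add: mult.commute)
    have "frac scN (- p) n s = frac scN (- p) (scN c n) (b ^ e)"
      by (rule frac_eqI[OF NN mp sp bp eq])
    then show "p \<in> Dset \<and> \<gamma> p = frac scN (- p) (scN c n) (b ^ e)" using *(1,3) by (rule_tac conjI) simp_all
  qed
next
  case (genM x r)
  from genM.IH obtain m k where mk: "\<forall>p. prime_ideal p \<and> x \<notin> p \<longrightarrow> p \<in> Dset \<and> \<gamma> p = frac scN (- p) m (x ^ k)"
    by metis
  show ?case
  proof (intro exI allI impI)
    fix p assume p: "prime_ideal p \<and> r * x \<notin> p"
    have xp: "x \<notin> p"
    proof
      assume "x \<in> p" then have "r * x \<in> p" using p p_mul by blast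
      with p show False by blast
    qed
    have *: "p \<in> Dset" "\<gamma> p = frac scN (- p) m (x ^ k)" using mk p xp by metis+
    have mp: "mset (- p)" using mset_prime p by blast
    have xk: "x ^ k \<in> - p" using prime_pow2[OF p xp] .
    have rxk: "(r * x) ^ k \<in> - p" using prime_pow2[OF p] p by simp
    have eq: "scN ((r * x) ^ k) m = scN (x ^ k) (scN (r ^ k) m)"
      using module.scale_scale[OF NN, of "x ^ k" "r ^ k" m] by (simp add: power_mult_distrib mult.commute)
    have "frac scN (- p) m (x ^ k) = frac scN (- p) (scN (r ^ k) m) ((r * x) ^ k)"
      by (rule frac_eqI[OF NN mp xk rxk eq])
    then show "p \<in> Dset \<and> \<gamma> p = frac scN (- p) (scN (r ^ k) m) ((r * x) ^ k)" using * by (rule_tac conjI) simp_all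
  qed
next
  case (genA x y)
  from genA.IH(1) obtain m1 k1 where
    mk1: "\<forall>p. prime_ideal p \<and> x \<notin> p \<longrightarrow> p \<in> Dset \<and> \<gamma> p = frac scN (- p) m1 (x ^ k1)" by metis
  from genA.IH(2) obtain m2 k2 where
    mk2: "\<forall>p. prime_ideal p \<and> y \<notin> p \<longrightarrow> p \<in> Dset \<and> \<gamma> p = frac scN (- p) m2 (y ^ k2)" by metis
  interpret N: module scN by (rule NN)
  let ?v = "scN (y ^ k2) m1 - scN (x ^ k1) m2"
  have "\<exists>T. (x * y) ^ T \<in> {t. scN t ?v = 0}"
  proof (rule rad[OF ann_ideal[OF NN]], intro allI impI)
    fix q assume q: "prime_ideal q \<and> {t. scN t ?v = 0} \<subseteq> q"
    show "x * y \<in> q"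
    proof (rule ccontr)
      assume xyq: "x * y \<notin> q"
      have xq: "x \<notin> q"
      proof
        assume "x \<in> q" then have "y * x \<in> q" using q p_mul by blast
        with xyq show False by (simp add: mult.commute)
      qed
      have yq: "y \<notin> q"
      proof
        assume "y \<in> q" then have "x * y \<in> q" using q p_mul by blast
        with xyq show False by blast
      qed
      have g1: "\<gamma> q = frac scN (- q) m1 (x ^ k1)" using mk1 q xq by metis
      have g2: "\<gamma> q = frac scN (- q) m2 (y ^ k2)" using mk2 q yq by metis
      have fe: "frac scN (- q) m1 (x ^ k1) = frac scN (- q) m2 (y ^ k2)" using g1 g2 by simp
      have mq: "mset (- q)" using mset_prime q by blast
      have xs: "x ^ k1 \<in> - q" using prime_pow2[OF q xq] .
      have ys: "y ^ k2 \<in> - q" using prime_pow2[OF q yq] .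
      obtain t where "t \<in> - q" "scN t ?v = 0"
        using frac_eq[OF NN mq xs ys, of m1 m2] fe by blast
      then show False using q by blast
    qed
  qed
  then obtain T where T: "scN ((x * y) ^ T) ?v = 0" by blast
  define X where "X = x ^ (k1 + T)"
  define Y where "Y = y ^ (k2 + T)"
  define M1 where "M1 = scN (x ^ T) m1"
  define M2 where "M2 = scN (y ^ T) m2"
  have "scN Y M1 - scN X M2 = scN ((x * y) ^ T) ?v"
    unfolding X_def Y_def M1_def M2_def by (simp add: algebra_simps power_add power_mult_distrib)
  then have key: "scN Y M1 = scN X M2" using T by simp
  let ?J = "{al * X + be * Y | al be. True}"
  have "\<exists>N. (x + y) ^ N \<in> ?J"
  proof (rule rad)
    have a1: "0 \<in> ?J" by (intro CollectI exI[of _ 0]) simp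
    have a2: "u + v \<in> ?J" if "u \<in> ?J" "v \<in> ?J" for u v
    proof -
      from that obtain a1 b1 a2 b2 where "u = a1 * X + b1 * Y" "v = a2 * X + b2 * Y" by blast
      then have "u + v = (a1 + a2) * X + (b1 + b2) * Y" by (simp add: algebra_simps)
      then show "u + v \<in> ?J" by blast
    qed
    have a3: "r * u \<in> ?J" if "u \<in> ?J" for r u
    proof -
      from that obtain a1 b1 where "u = a1 * X + b1 * Y" by blast
      then have "r * u = (r * a1) * X + (r * b1) * Y" by (simp add: algebra_simps)
      then show "r * u \<in> ?J" by blast
    qed
    show "r_ideal ?J" unfolding r_ideal_def using a1 a2 a3 by blast
  next
    show "\<forall>q. prime_ideal q \<and> ?J \<subseteq> q \<longrightarrow> x + y \<in> q"
    proof (intro allI impI)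
      fix q assume q: "prime_ideal q \<and> ?J \<subseteq> q"
      have "X \<in> ?J" by (intro CollectI exI[of _ 1] exI[of _ 0]) simp
      moreover have "Y \<in> ?J" by (intro CollectI exI[of _ 0] exI[of _ 1]) simp
      ultimately have XY: "X \<in> q" "Y \<in> q" using q by auto
      have "x \<in> q" using XY(1) prime_pow2[OF q, of x "k1 + T"] unfolding X_def by blast
      moreover have "y \<in> q" using XY(2) prime_pow2[OF q, of y "k2 + T"] unfolding Y_def by blast
      ultimately show "x + y \<in> q" using q p_add by blast
    qed
  qed
  then obtain N al be where N: "(x + y) ^ N = al * X + be * Y" by blast
  define m where "m = scN al M1 + scN be M2"
  have eY: "scN Y m = scN ((x + y) ^ N) M2"
  proof -
    have "scN Y m = scN al (scN Y M1) + scN be (scN Y M2)"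
      unfolding m_def by (simp add: N.scale_right_distrib mult.commute)
    also have "\<dots> = scN al (scN X M2) + scN be (scN Y M2)" by (simp only: key)
    also have "\<dots> = scN (al * X + be * Y) M2" by (simp add: algebra_simps)
    finally show ?thesis unfolding N .
  qed
  have eX: "scN X m = scN ((x + y) ^ N) M1"
  proof -
    have "scN X m = scN al (scN X M1) + scN be (scN X M2)"
      unfolding m_def by (simp add: N.scale_right_distrib mult.commute)
    also have "\<dots> = scN al (scN X M1) + scN be (scN Y M1)" by (simp only: key)
    also have "\<dots> = scN (al * X + be * Y) M1" by (simp add: algebra_simps)
    finally show ?thesis unfolding N .
  qed
  show ?case
  proof (intro exI allI impI)
    fix p assume p: "prime_ideal p \<and> x + y \<notin> p"
    then have zp: "(x + y) ^ N \<in> - p" using prime_pow2[OF p] p by simp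
    have mp: "mset (- p)" using mset_prime p by blast
    have "x \<notin> p \<or> y \<notin> p" using p p_add by blast
    then show "p \<in> Dset \<and> \<gamma> p = frac scN (- p) m ((x + y) ^ N)"
    proof
      assume xp: "x \<notin> p"
      have *: "p \<in> Dset" "\<gamma> p = frac scN (- p) m1 (x ^ k1)" using mk1 p xp by metis+
      have xs: "x ^ k1 \<in> - p" "x ^ T \<in> - p" using prime_pow2[OF p xp] by simp_all
      have "scN (x ^ T) (scN ((x + y) ^ N) m1 - scN (x ^ k1) m) = scN ((x + y) ^ N) M1 - scN X m"
        unfolding M1_def X_def by (simp add: algebra_simps power_add)
      also have "\<dots> = 0" using eX by simp
      finally have "frac scN (- p) m1 (x ^ k1) = frac scN (- p) m ((x + y) ^ N)"
        using frac_eq[OF NN mp xs(1) zp, of m1 m] xs(2) by blast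
      then show ?thesis using * by (rule_tac conjI) simp_all
    next
      assume yp: "y \<notin> p"
      have *: "p \<in> Dset" "\<gamma> p = frac scN (- p) m2 (y ^ k2)" using mk2 p yp by metis+
      have ys: "y ^ k2 \<in> - p" "y ^ T \<in> - p" using prime_pow2[OF p yp] by simp_all
      have "scN (y ^ T) (scN ((x + y) ^ N) m2 - scN (y ^ k2) m) = scN ((x + y) ^ N) M2 - scN Y m"
        unfolding M2_def Y_def by (simp add: algebra_simps power_add)
      also have "\<dots> = 0" using eY by simp
      finally have "frac scN (- p) m2 (y ^ k2) = frac scN (- p) m ((x + y) ^ N)"
        using frac_eq[OF NN mp ys(1) zp, of m2 m] ys(2) by blast
      then show ?thesis using * by (rule_tac conjI) simp_all
    qed
  qed
qed


lemma G_surj: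
  assumes gs: "\<gamma> \<in> sections scM scN U"
  shows "\<exists>n k. \<gamma> = G n (a ^ k)"
proof -
  have sec: "\<forall>p\<in>Supp scM U. \<gamma> p \<in> loc_carrier scN (S_prime p)"
    "\<forall>p. p \<notin> Supp scM U \<longrightarrow> \<gamma> p = {}"
    "\<forall>Q\<in>U. \<exists>W. zopen scM W \<and> Q \<in> W \<and> W \<subseteq> U \<and>
        (\<exists>s n. \<forall>P\<in>W. s \<notin> colon scM P \<and> \<gamma> (colon scM P) = frac scN (S_prime (colon scM P)) n s)"
    using gs unfolding sections_def by blast+
  have cover: "\<exists>b\<in>Bset \<gamma>. b \<notin> p" if pD: "p \<in> Dset" for p
  proof -
    from pD have "p \<in> Supp scM U" using Supp_U by simp
    then obtain Q where Q: "Q \<in> U" "p = colon scM Q" unfolding Supp_def by blast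
    obtain W s n where W: "zopen scM W" "Q \<in> W" "W \<subseteq> U"
      and sn: "\<forall>P\<in>W. s \<notin> colon scM P \<and> \<gamma> (colon scM P) = frac scN (S_prime (colon scM P)) n s"
      using sec(3) Q(1) by metis
    obtain L where L: "submod scM L" "W = mSpec scM - zV scM L" using W(1) unfolding zopen_def by blast
    have "r_ideal (colon scM L)" using colon_ideal[OF MM L(1)] .
    then obtain b where b: "colon scM L = range (\<lambda>r. r * b)" using pid unfolding is_pid_def by blast
    have Wc: "\<And>P. P \<in> W \<longleftrightarrow> P \<in> mSpec scM \<and> b \<notin> colon scM P"
      using W_char[OF L(1) b] L(2) by simp
    have "b \<notin> p" using Wc[of Q] W(2) Q(2) by simp
    moreover have "b \<in> Bset \<gamma>"
      unfolding Bset_def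
    proof (intro CollectI exI allI impI)
      fix q assume q: "prime_ideal q \<and> b \<notin> q"
      then obtain P where P: "P \<in> mSpec scM" "colon scM P = q" using surj by blast
      then have PW: "P \<in> W" using Wc q by simp
      then have "P \<in> U" using W(3) by blast
      then have "q \<in> Dset" using U_char P q by auto
      moreover have "s \<notin> q" "\<gamma> q = frac scN (- q) n s" using sn PW P(2) by auto
      ultimately show "q \<in> Dset \<and> s \<notin> q \<and> \<gamma> q = frac scN (- q) n s" by blast
    qed
    ultimately show ?thesis by blast
  qed
  have "\<exists>j. a ^ j \<in> gen (Bset \<gamma>)"
  proof (rule rad[OF gen_ideal], intro allI impI)
    fix q assume q: "prime_ideal q \<and> gen (Bset \<gamma>) \<subseteq> q"
    show "a \<in> q"
    proof (rule ccontr)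
      assume "a \<notin> q"
      then have "q \<in> Dset" using q by simp
      then obtain b where "b \<in> Bset \<gamma>" "b \<notin> q" using cover by blast
      then show False using q gen.genB by blast
    qed
  qed
  then obtain j where j: "a ^ j \<in> gen (Bset \<gamma>)" by blast
  from glue[OF j] obtain m k where
    mk: "\<forall>p. prime_ideal p \<and> a ^ j \<notin> p \<longrightarrow> p \<in> Dset \<and> \<gamma> p = frac scN (- p) m ((a ^ j) ^ k)"
    by metis
  have "\<gamma> = G m (a ^ (j * k))"
  proof
    fix p show "\<gamma> p = G m (a ^ (j * k)) p"
    proof (cases "p \<in> Dset")
      case True
      then have pp: "prime_ideal p" "a \<notin> p" by auto
      then have "a ^ j \<notin> p" using prime_pow by blast
      then have "\<gamma> p = frac scN (- p) m ((a ^ j) ^ k)" using mk pp by metis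
      then show ?thesis using True by (simp add: power_mult)
    next
      case False
      then have "\<gamma> p = {}" using sec(2) Supp_U by metis
      then show ?thesis by (simp only: if_not_P[OF False])
    qed
  qed
  then show ?thesis by blast
qed

definition gmap :: "('n \<times> 'r) set \<Rightarrow> 'r set \<Rightarrow> ('n \<times> 'r) set" where
  "gmap x = G (fst (SOME y. y \<in> x)) (snd (SOME y. y \<in> x))"

lemma gmap_frac:
  assumes s: "s \<in> S_pow a" shows "gmap (frac scN (S_pow a) n s) = G n s"
proof -
  let ?y = "SOME y. y \<in> frac scN (S_pow a) n s"
  have "(n, s) \<in> frac scN (S_pow a) n s" using self_in_frac[OF NN mset_pow s] .
  then have "?y \<in> frac scN (S_pow a) n s" by (rule someI)
  then have "(fst ?y, snd ?y) \<in> frac scN (S_pow a) n s" by simp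
  then have "snd ?y \<in> S_pow a \<and> frac scN (S_pow a) (fst ?y) (snd ?y) = frac scN (S_pow a) n s"
    using frac_member[OF NN mset_pow s] by blast
  then have "G (fst ?y) (snd ?y) = G n s" using G_welldef[OF _ s, of "snd ?y" "fst ?y" n] by blast
  then show ?thesis unfolding gmap_def .
qed

lemma carrier_pow: "x \<in> loc_carrier scN (S_pow a) \<longleftrightarrow> (\<exists>n k. x = frac scN (S_pow a) n (a ^ k))"
  unfolding loc_carrier_def by blast

lemma pow_in: "a ^ k \<in> S_pow a" by simp

lemma gmap_bij: "bij_betw gmap (loc_carrier scN (S_pow a)) (sections scM scN U)"
proof (rule bij_betw_imageI)
  show "inj_on gmap (loc_carrier scN (S_pow a))"
  proof (rule inj_onI)
    fix x y assume x: "x \<in> loc_carrier scN (S_pow a)" and y: "y \<in> loc_carrier scN (S_pow a)"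
      and eq: "gmap x = gmap y"
    obtain n k where xn: "x = frac scN (S_pow a) n (a ^ k)" using x carrier_pow by blast
    obtain n' k' where yn: "y = frac scN (S_pow a) n' (a ^ k')" using y carrier_pow by blast
    have "G n (a ^ k) = gmap x" using gmap_frac[OF pow_in] xn by simp
    also have "\<dots> = gmap y" by (rule eq)
    also have "\<dots> = G n' (a ^ k')" using gmap_frac[OF pow_in] yn by simp
    finally have "G n (a ^ k) = G n' (a ^ k')" .
    then have "frac scN (S_pow a) n (a ^ k) = frac scN (S_pow a) n' (a ^ k')"
      by (rule G_inj[OF pow_in pow_in])
    then show "x = y" using xn yn by simp
  qed
next
  show "gmap ` loc_carrier scN (S_pow a) = sections scM scN U"
  proof (intro equalityI subsetI)
    fix g assume "g \<in> gmap ` loc_carrier scN (S_pow a)"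
    then obtain x where x: "x \<in> loc_carrier scN (S_pow a)" "g = gmap x" by blast
    obtain n k where xn: "x = frac scN (S_pow a) n (a ^ k)" using x(1) carrier_pow by blast
    have "g = G n (a ^ k)" using gmap_frac[OF pow_in] xn x(2) by simp
    then show "g \<in> sections scM scN U" using G_sections[OF pow_in] by simp
  next
    fix g assume g: "g \<in> sections scM scN U"
    obtain n k where "g = G n (a ^ k)" using G_surj[OF g] by blast
    then have "g = gmap (frac scN (S_pow a) n (a ^ k))" using gmap_frac[OF pow_in] by simp
    moreover have "frac scN (S_pow a) n (a ^ k) \<in> loc_carrier scN (S_pow a)" using carrier_pow by blast
    ultimately show "g \<in> gmap ` loc_carrier scN (S_pow a)" by blast
  qed
qed

lemma iso: "sections_iso_loc scM scN U a"
proof -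
  let ?C = "loc_carrier scN (S_pow a)"
  let ?f = "inv_into ?C gmap"
  have bij: "bij_betw gmap ?C (sections scM scN U)" by (rule gmap_bij)
  have inj: "inj_on gmap ?C" using bij by (rule bij_betw_imp_inj_on)
  have ff: "?f (gmap z) = z" if "z \<in> ?C" for z using inv_into_f_f[OF inj that] .
  have inC: "frac scN (S_pow a) n (a ^ k) \<in> ?C" for n k using carrier_pow by blast
  have rep: "\<exists>n k. ?f \<gamma> = frac scN (S_pow a) n (a ^ k) \<and> \<gamma> = G n (a ^ k)" if g: "\<gamma> \<in> sections scM scN U" for \<gamma>
  proof -
    obtain n k where nk: "\<gamma> = G n (a ^ k)" using G_surj[OF g] by blast
    have "gmap (frac scN (S_pow a) n (a ^ k)) = G n (a ^ k)" using gmap_frac[OF pow_in] .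
    then have "\<gamma> = gmap (frac scN (S_pow a) n (a ^ k))" using nk by simp
    then have "?f \<gamma> = frac scN (S_pow a) n (a ^ k)" using ff[OF inC] by simp
    then show ?thesis using nk by blast
  qed
  show ?thesis unfolding sections_iso_loc_def
  proof (intro exI conjI ballI allI)
    show "bij_betw ?f (sections scM scN U) ?C" using bij_betw_inv_into[OF bij] .
  next
    fix \<gamma> \<delta> assume g: "\<gamma> \<in> sections scM scN U" and d: "\<delta> \<in> sections scM scN U"
    obtain n k where n: "?f \<gamma> = frac scN (S_pow a) n (a ^ k)" "\<gamma> = G n (a ^ k)" using rep[OF g] by blast
    obtain n' k' where n': "?f \<delta> = frac scN (S_pow a) n' (a ^ k')" "\<delta> = G n' (a ^ k')" using rep[OF d] by blast
    have s3: "a ^ k * a ^ k' \<in> S_pow a" by (metis power_add rangeI)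
    let ?Z = "loc_add scN (S_pow a) (frac scN (S_pow a) n (a ^ k)) (frac scN (S_pow a) n' (a ^ k'))"
    have Z: "?Z = frac scN (S_pow a) (scN (a ^ k') n + scN (a ^ k) n') (a ^ k * a ^ k')"
      by (rule loc_add_frac[OF NN mset_pow pow_in pow_in])
    have "sec_add scM scN U \<gamma> \<delta> = G (scN (a ^ k') n + scN (a ^ k) n') (a ^ k * a ^ k')"
      unfolding n(2) n'(2) by (rule G_add[OF pow_in pow_in])
    also have "\<dots> = gmap ?Z"
      unfolding Z by (rule gmap_frac[OF s3, symmetric])
    finally have e: "sec_add scM scN U \<gamma> \<delta> = gmap ?Z" .
    have inC2: "?Z \<in> ?C" unfolding Z loc_carrier_def using s3 by blast
    have "?f (sec_add scM scN U \<gamma> \<delta>) = ?Z" unfolding e by (rule ff[OF inC2])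
    then show "?f (sec_add scM scN U \<gamma> \<delta>) = loc_add scN (S_pow a) (?f \<gamma>) (?f \<delta>)"
      unfolding n(1) n'(1) .
  next
    fix r \<gamma> assume g: "\<gamma> \<in> sections scM scN U"
    obtain n k where n: "?f \<gamma> = frac scN (S_pow a) n (a ^ k)" "\<gamma> = G n (a ^ k)" using rep[OF g] by blast
    let ?Z = "loc_scale scN (S_pow a) r (frac scN (S_pow a) n (a ^ k))"
    have Z: "?Z = frac scN (S_pow a) (scN r n) (a ^ k)"
      by (rule loc_scale_frac[OF NN mset_pow pow_in])
    have "sec_scale scM scN U r \<gamma> = G (scN r n) (a ^ k)"
      unfolding n(2) by (rule G_scale[OF pow_in])
    also have "\<dots> = gmap ?Z"
      unfolding Z by (rule gmap_frac[OF pow_in, symmetric])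
    finally have e: "sec_scale scM scN U r \<gamma> = gmap ?Z" .
    have inC2: "?Z \<in> ?C" unfolding Z by (rule inC)
    have "?f (sec_scale scM scN U r \<gamma>) = ?Z" unfolding e by (rule ff[OF inC2])
    then show "?f (sec_scale scM scN U r \<gamma>) = loc_scale scN (S_pow a) r (?f \<gamma>)"
      unfolding n(1) .
  qed
qed

end

theorem corollary3p17:
  fixes scM :: "'r::idom \<Rightarrow> 'm::ab_group_add \<Rightarrow> 'm"
    and scN :: "'r \<Rightarrow> 'n::ab_group_add \<Rightarrow> 'n"
    and K :: "'m set"
  assumes "is_pid TYPE('r)"
    and "is_module scM" and "faithful scM" and "primeful scM" and "mSpec scM \<noteq> {}"
    and "is_module scN"
    and "submod scM K"
  shows "\<exists>a. sections_iso_loc scM scN (mSpec scM - zV scM K) a"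
proof -
  have MM: "module scM" and NN: "module scN" using assms(2,6) unfolding is_module_def by auto
  have "r_ideal (colon scM K)" using colon_ideal[OF MM assms(7)] .
  then obtain a where Kc: "colon scM K = range (\<lambda>r. r * a)" using assms(1) unfolding is_pid_def by blast
  have surj: "\<exists>P\<in>mSpec scM. colon scM P = p" if p: "prime_ideal p" for p
  proof -
    have nz: "(UNIV::'m set) \<noteq> {0}"
    proof
      assume u: "(UNIV::'m set) = {0}"
      obtain P where "P \<in> mSpec scM" using assms(5) by blast
      then have "submod scM P" "P \<noteq> UNIV" unfolding mSpec_def prime_submodule_def by auto
      moreover have "\<And>x::'m. x = 0" using u by auto
      ultimately show False unfolding submod_def by (metis UNIV_eq_I)
    qed
    have "annih scM \<subseteq> p" using assms(3) p p_zero unfolding faithful_def by auto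
    then show ?thesis using assms(4) nz p unfolding primeful_def by blast
  qed
  interpret stp scM scN K a
    unfolding stp_def using MM NN assms(1) surj assms(7) Kc by blast
  show ?thesis using iso by blast
qed

end
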